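(* Let $u\in(0,1]$, $w\in[0,1]$, $R>1$, and let $f:(0,\infty)\to[0,\infty)$, $N\mapsto f_N$, be a non-increasing function. For $x_C,x_D\geqslant 0$ with $x_C+x_D>0$ put $\pi_C(x_C,x_D)=R\frac{x_C}{x_C+x_D}-1$ and $\pi_D(x_C,x_D)=R\frac{x_C}{x_C+x_D}$, and consider the system $$x_C=\Big[\big(1-\tfrac{u}{2}\big)x_C\big(1+w\pi_C(x_C,x_D)\big)+\tfrac{u}{2}\,x_D\big(1+w\pi_D(x_C,x_D)\big)\Big]f_{x_C+x_D},$$ $$x_D=\Big[\tfrac{u}{2}\,x_C\big(1+w\pi_C(x_C,x_D)\big)+\big(1-\tfrac{u}{2}\big)x_D\big(1+w\pi_D(x_C,x_D)\big)\Big]f_{x_C+x_D}.$$ Then there exists $p\in(0,1)$ such that every solution $(x_C,x_D)$ of this system with $x_C,x_D\geqslant 0$ and $x_C+x_D>0$ satisfies $\frac{x_C}{x_C+x_D}=p$. That is, the fraction of cooperators is the same in every non-zero solution.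
   Context: The setting is a population of cooperators and defectors. $x_C$ and $x_D$ denote the expected numbers of cooperators and defectors, and the system above is the fixed-point ("metastable equilibrium") condition for the expected next-generation counts. Here $u$ is the mutation rate: an offspring switches to the other strategy with probability $u/2$. $w$ is the cost of cooperation, $R$ is the multiplication factor of a public goods game, and $f_N$ is the baseline reproductive capacity at population size $N$. *)

theory Defs
  imports Complex_Main
begin

definition piC :: "real \<Rightarrow> real \<Rightarrow> real \<Rightarrow> real" where
  "piC R xC xD = R * (xC / (xC + xD)) - 1"

definition piD :: "real \<Rightarrow> real \<Rightarrow> real \<Rightarrow> real" where
  "piD R xC xD = R * (xC / (xC + xD))"

end

theory Submission
  imports Defs
begin

lemma key:
  fixes u w R q F :: real
  assumes e1: "q = ((1 - u/2) * q * (1 + w * (R*q - 1)) + (u/2) * (1-q) * (1 + w * (R*q))) * F"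
    and e2: "1 - q = ((u/2) * q * (1 + w * (R*q - 1)) + (1 - u/2) * (1-q) * (1 + w * (R*q))) * F"
  shows "w*(u*R-1) * q^2 + (u + w*(1 - u/2 - u*R/2)) * q - u/2 = 0"
proof -
  let ?a = "1 + w * (R*q - 1)" and ?b = "1 + w * (R*q)"
  have s: "1 = (q * ?a + (1-q) * ?b) * F" using e1 e2 by (simp add: algebra_simps)
  hence F0: "F \<noteq> 0" by auto
  have "q * (q * ?a + (1-q) * ?b) * F = ((1 - u/2) * q * ?a + (u/2) * (1-q) * ?b) * F"
    using s e1 by (metis mult.assoc mult.commute mult.right_neutral)
  hence "q * (q * ?a + (1-q) * ?b) = ((1 - u/2) * q * ?a + (u/2) * (1-q) * ?b)"
    using F0 by simp
  thus ?thesis by (simp add: algebra_simps power2_eq_square) argo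
qed

theorem mainTheorem1:
  fixes u w R :: real and f :: "real \<Rightarrow> real"
  assumes hu: "0 < u" "u \<le> 1"
    and hw: "0 \<le> w" "w \<le> 1"
    and hR: "R > 1"
    and hf_nonneg: "\<And>N. N > 0 \<Longrightarrow> f N \<ge> 0"
    and hf_mono: "\<And>a b. 0 < a \<Longrightarrow> a \<le> b \<Longrightarrow> f b \<le> f a"
  shows "\<exists>p. 0 < p \<and> p < 1 \<and>
    (\<forall>xC xD. xC \<ge> 0 \<longrightarrow> xD \<ge> 0 \<longrightarrow> xC + xD > 0 \<longrightarrow>
      xC = ((1 - u/2) * xC * (1 + w * piC R xC xD) + (u/2) * xD * (1 + w * piD R xC xD)) * f (xC + xD) \<longrightarrow>
      xD = ((u/2) * xC * (1 + w * piC R xC xD) + (1 - u/2) * xD * (1 + w * piD R xC xD)) * f (xC + xD) \<longrightarrow>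
      xC / (xC + xD) = p)"
proof -
  define A where "A = w*(u*R-1)"
  define B where "B = u + w*(1 - u/2 - u*R/2)"
  define g where "g = (\<lambda>q::real. A * q^2 + B * q - u/2)"
  have g0: "g 0 < 0" using hu by (simp add: g_def)
  have g1: "g 1 > 0"
  proof -
    have G1: "g 1 = u/2 * (1 + w*(R-1))" by (simp add: g_def A_def B_def algebra_simps)
    have P1: "1 + w*(R-1) > 0" using hw hR by (smt (verit) mult_nonneg_nonneg)
    have "u * (1 + w*(R-1)) > 0" using hu(1) P1 by (rule mult_pos_pos)
    with G1 show ?thesis by linarith
  qed
  have cont: "continuous_on {0..1} g" unfolding g_def by (intro continuous_intros)
  obtain p where p: "0 \<le> p" "p \<le> 1" "g p = 0"
  proof -
    have "g 0 \<le> 0" "0 \<le> g 1" using g0 g1 by auto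
    from IVT'[of g 0 0 1, OF this _ cont] obtain x where "0 \<le> x" "x \<le> 1" "g x = 0" by auto
    thus ?thesis using that by blast
  qed
  have p01: "0 < p" "p < 1" using p g0 g1 by (auto simp: order_le_less)
  have uniq: "q = p" if q: "0 \<le> q" "q \<le> 1" "g q = 0" for q
  proof (rule ccontr)
    assume ne: "q \<noteq> p"
    have "(q - p) * (A*(q+p) + B) = g q - g p" by (simp add: g_def algebra_simps power2_eq_square)
    hence S: "A*(q+p) + B = 0" using ne q p by simp
    have P: "A*p*q = -u/2"
    proof -
      have "A*p^2 + B*p = u/2" using p(3) by (simp add: g_def)
      moreover have "B = - A*(q+p)" using S by simp
      ultimately have "A*p^2 - A*(q+p)*p = u/2" by simp
      thus ?thesis by (simp add: algebra_simps power2_eq_square)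
    qed
    have "g 1 = A*(1-p)*(1-q)" using S P by (simp add: g_def algebra_simps)
    moreover have "A < 0"
    proof -
      have "p*q \<ge> 0" using p q by simp
      show ?thesis
      proof (rule ccontr)
        assume "\<not> A < 0"
        hence "A*(p*q) \<ge> 0" using \<open>p*q \<ge> 0\<close> by simp
        thus False using P hu(1) by (simp add: mult.assoc)
      qed
    qed
    moreover have "(1-p)*(1-q) \<ge> 0" using p q by simp
    ultimately have "g 1 \<le> 0" by (simp add: mult.assoc mult_nonpos_nonneg)
    thus False using g1 by simp
  qed
  show ?thesis
  proof (intro exI conjI allI impI)
    show "0 < p" "p < 1" by (fact p01)+
    fix xC xD :: real
    assume h: "xC \<ge> 0" "xD \<ge> 0" "xC + xD > 0"
      and e1: "xC = ((1 - u/2) * xC * (1 + w * piC R xC xD) + (u/2) * xD * (1 + w * piD R xC xD)) * f (xC + xD)"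
      and e2: "xD = ((u/2) * xC * (1 + w * piC R xC xD) + (1 - u/2) * xD * (1 + w * piD R xC xD)) * f (xC + xD)"
    define N where "N = xC + xD"
    define q where "q = xC / N"
    have N0: "N > 0" using h N_def by simp
    have xC: "xC = q*N" and xD: "xD = (1-q)*N" using N0 by (auto simp: q_def N_def field_simps)
    have pc: "piC R xC xD = R*q - 1" and pd: "piD R xC xD = R*q"
      by (simp_all add: piC_def piD_def q_def N_def)
    have E1: "q = ((1 - u/2) * q * (1 + w * (R*q - 1)) + (u/2) * (1-q) * (1 + w * (R*q))) * f N" (is "_ = ?r")
    proof -
      have "q*N = ((1 - u/2) * (q*N) * (1 + w * (R*q - 1)) + (u/2) * ((1-q)*N) * (1 + w * (R*q))) * f N"
        unfolding xC[symmetric] xD[symmetric] using e1 unfolding pc pd N_def[symmetric] by simp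
      hence "q*N = (?r) * N" by (simp add: field_simps)
      thus ?thesis using N0 by simp
    qed
    have E2: "1 - q = ((u/2) * q * (1 + w * (R*q - 1)) + (1 - u/2) * (1-q) * (1 + w * (R*q))) * f N" (is "_ = ?r")
    proof -
      have "(1-q)*N = ((u/2) * (q*N) * (1 + w * (R*q - 1)) + (1 - u/2) * ((1-q)*N) * (1 + w * (R*q))) * f N"
        unfolding xC[symmetric] xD[symmetric] using e2 unfolding pc pd N_def[symmetric] by simp
      hence "(1-q)*N = (?r) * N" by (simp add: field_simps)
      thus ?thesis using N0 by simp
    qed
    have "g q = 0" using key[OF E1 E2] by (simp add: g_def A_def B_def)
    moreover have "0 \<le> q" "q \<le> 1" using h N0 by (auto simp: q_def N_def divide_le_eq_1)
    ultimately have "q = p" using uniq by blast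
    thus "xC / (xC + xD) = p" by (simp add: q_def N_def)
  qed
qed

end
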